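(* Assume coarse consistency, coarse positivity and coarse time-varying conditional parallel trends (all defined in the context). Then the true coarse blip functions $\gamma^{c*}$ satisfy, for all $0\le m<k\le K$, almost surely on $\{T\ge m\}$, $$E[H^c_{mk}(\gamma^{c*})-H^c_{m,k-1}(\gamma^{c*})\mid T\ge m,A_m,\bar L_m]=E[H^c_{mk}(\gamma^{c*})-H^c_{m,k-1}(\gamma^{c*})\mid T>m,\bar L_m]. \qquad ( * )$$ Moreover, $\gamma^{c*}$ is the unique vector of functions with this property. If $\gamma^c=(\gamma^c_{mk}(\bar l_m,a_m))_{0\le m<k\le K}$ satisfies $( * )$ for all $0\le m<k\le K$, then $\gamma^c_{mk}(\bar L_m,A_m)=\gamma^{c*}_{mk}(\bar L_m,A_m)$ almost surely on $\{T=m\}$ for all $m<k$.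
   Context: **Data.** Subjects are observed at times $0,1,\dots,K$. At each time $m$ the data $(Z_m,Y_m,A_m)$ are collected in that temporal order: - $A_m$ is the treatment at time $m$, coded so that $0$ is the baseline level; - $Y_m$ is the outcome; - $Z_m$ are other covariates. For a time-varying variable $X$, write $\bar X_m=(X_0,\dots,X_m)$; negative-index variables are null. Define $\bar L_m=(\bar Z_m,\bar Y_{m-1},\bar A_{m-1})$. **Treatment initiation.** $T=\min\{m:A_m\neq 0\}\in\{0,\dots,K,\infty\}$, with $T=\infty$ if treatment is never initiated. **Counterfactuals.** $Y_k(m,a_m)$ is the counterfactual outcome at time $k$ under first initiating treatment at time $m$ at value $a_m$. $Y_k(\infty)$ is the counterfactual under never initiating. Also $Y_k(m,a_m)=Y_k(\infty)$ for $k\le m$. **Assumptions.** - Coarse consistency: $Y_k=Y_k(T,A_T)$ on $\{T<k\}$ and $Y_k=Y_k(\infty)$ on $\{T\ge k\}$. - Coarse positivity: for every $m$, $P(A_m=0\mid\bar L_m,T\ge m)>0$ (positive density at $0$) almost surely on $\{T\ge m\}$. - Coarse parallel trends: for all $m<k$, $$E[Y_k(\infty)-Y_{k-1}(\infty)\mid T=m,A_m,\bar L_m]=E[Y_k(\infty)-Y_{k-1}(\infty)\mid T>m,\bar L_m].$$ **Coarse blip functions.** $$\gamma^{c*}_{mk}(\bar l_m,a_m)\equiv E[Y_k(m,a_m)-Y_k(\infty)\mid T=m,A_m=a_m,\bar L_m=\bar l_m].$$ **Blipped-down outcomes.** - $H^c_{mk}(\gamma^c)\equiv Y_k-\sum_{j=m}^{k-1}\gamma^c_{jk}(\bar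 L_j,A_j)\mathbb 1\{T=j\}$ for $k>m$; - $H^c_{mm}(\gamma^c)\equiv Y_m$. *)

theory Defs
  imports "HOL-Probability.Probability"
begin

definition Tinit :: "nat \<Rightarrow> (nat \<Rightarrow> 'a \<Rightarrow> real) \<Rightarrow> 'a \<Rightarrow> enat" where
  "Tinit K A \<omega> = (if \<exists>m\<le>K. A m \<omega> \<noteq> 0 then enat (LEAST m. A m \<omega> \<noteq> 0) else \<infinity>)"

definition Lbar :: "(nat \<Rightarrow> 'a \<Rightarrow> 'z) \<Rightarrow> (nat \<Rightarrow> 'a \<Rightarrow> real) \<Rightarrow> (nat \<Rightarrow> 'a \<Rightarrow> real) \<Rightarrow> nat \<Rightarrow> 'a
     \<Rightarrow> (nat \<Rightarrow> 'z) \<times> (nat \<Rightarrow> real) \<times> (nat \<Rightarrow> real)" where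
  "Lbar Z Y A m \<omega> = (restrict (\<lambda>j. Z j \<omega>) {..m}, restrict (\<lambda>j. Y j \<omega>) {..<m}, restrict (\<lambda>j. A j \<omega>) {..<m})"

definition LM :: "'z measure \<Rightarrow> nat \<Rightarrow> ((nat \<Rightarrow> 'z) \<times> (nat \<Rightarrow> real) \<times> (nat \<Rightarrow> real)) measure" where
  "LM Mz m = (\<Pi>\<^sub>M j\<in>{..m}. Mz) \<Otimes>\<^sub>M ((\<Pi>\<^sub>M j\<in>{..<m}. (borel :: real measure)) \<Otimes>\<^sub>M (\<Pi>\<^sub>M j\<in>{..<m}. (borel :: real measure)))"

definition sigL :: "'a measure \<Rightarrow> 'z measure \<Rightarrow> (nat \<Rightarrow> 'a \<Rightarrow> 'z) \<Rightarrow> (nat \<Rightarrow> 'a \<Rightarrow> real) \<Rightarrow> (nat \<Rightarrow> 'a \<Rightarrow> real) \<Rightarrow> nat \<Rightarrow> 'a measure" where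
  "sigL M Mz Z Y A m = vimage_algebra (space M) (Lbar Z Y A m) (LM Mz m)"

definition sigLA :: "'a measure \<Rightarrow> 'z measure \<Rightarrow> (nat \<Rightarrow> 'a \<Rightarrow> 'z) \<Rightarrow> (nat \<Rightarrow> 'a \<Rightarrow> real) \<Rightarrow> (nat \<Rightarrow> 'a \<Rightarrow> real) \<Rightarrow> nat \<Rightarrow> 'a measure" where
  "sigLA M Mz Z Y A m = vimage_algebra (space M) (\<lambda>\<omega>. (Lbar Z Y A m \<omega>, A m \<omega>)) (LM Mz m \<Otimes>\<^sub>M borel)"

text \<open>On S it is the conditional expectation given S and F; evaluated anywhere it is the
  regression function of X on the F-variables within the subpopulation S.\<close>
definition condE_on :: "'a measure \<Rightarrow> 'a set \<Rightarrow> 'a measure \<Rightarrow> ('a \<Rightarrow> real) \<Rightarrow> 'a \<Rightarrow> real" where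
  "condE_on M S F X \<omega> = real_cond_exp M F (\<lambda>x. indicator S x * X x) \<omega> / real_cond_exp M F (indicator S) \<omega>"

text \<open>Blipped-down outcome H^c_{mk}(g) (for k = m the sum is empty, giving Y_m).\<close>
definition Hc :: "(nat \<Rightarrow> 'a \<Rightarrow> real) \<Rightarrow> (nat \<Rightarrow> 'a \<Rightarrow> real) \<Rightarrow> (nat \<Rightarrow> 'a \<Rightarrow> 'h) \<Rightarrow> ('a \<Rightarrow> enat)
     \<Rightarrow> (nat \<Rightarrow> nat \<Rightarrow> 'h \<times> real \<Rightarrow> real) \<Rightarrow> nat \<Rightarrow> nat \<Rightarrow> 'a \<Rightarrow> real" where
  "Hc Y A L T g m k \<omega> = Y k \<omega> - (\<Sum>j\<in>{m..<k}. g j k (L j \<omega>, A j \<omega>) * indicator {x. T x = enat j} \<omega>)"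

definition star_prop :: "'a measure \<Rightarrow> 'z measure \<Rightarrow> (nat \<Rightarrow> 'a \<Rightarrow> 'z) \<Rightarrow> (nat \<Rightarrow> 'a \<Rightarrow> real) \<Rightarrow> (nat \<Rightarrow> 'a \<Rightarrow> real)
     \<Rightarrow> ('a \<Rightarrow> enat) \<Rightarrow> (nat \<Rightarrow> nat \<Rightarrow> ((nat \<Rightarrow> 'z) \<times> (nat \<Rightarrow> real) \<times> (nat \<Rightarrow> real)) \<times> real \<Rightarrow> real)
     \<Rightarrow> nat \<Rightarrow> nat \<Rightarrow> bool" where
  "star_prop M Mz Z Y A T g m k =
     (AE \<omega> in M. T \<omega> \<ge> enat m \<longrightarrow>
        condE_on M {x. T x \<ge> enat m} (sigLA M Mz Z Y A m)
          (\<lambda>x. Hc Y A (Lbar Z Y A) T g m k x - Hc Y A (Lbar Z Y A) T g m (k - 1) x) \<omega>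
      = condE_on M {x. T x > enat m} (sigL M Mz Z Y A m)
          (\<lambda>x. Hc Y A (Lbar Z Y A) T g m k x - Hc Y A (Lbar Z Y A) T g m (k - 1) x) \<omega>)"

end

theory Submission
  imports Defs
begin


lemma sfs:
  assumes "prob_space M" "subalgebra M F"
  shows "sigma_finite_subalgebra M F"
proof -
  interpret prob_space M by fact
  show ?thesis
    by (intro finite_measure_subalgebra_is_sigma_finite finite_measure_subalgebra.intro
          finite_measure_axioms finite_measure_subalgebra_axioms.intro assms(2))
qed

lemma integrable_bdd_mult:
  fixes X h :: "'a \<Rightarrow> real"
  assumes "integrable M X" "h \<in> borel_measurable M" "AE x in M. \<bar>h x\<bar> \<le> 1"
  shows "integrable M (\<lambda>x. h x * X x)"
proof (rule Bochner_Integration.integrable_bound[OF assms(1)])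
  show "(\<lambda>x. h x * X x) \<in> borel_measurable M" using assms by measurable
  show "AE x in M. norm (h x * X x) \<le> norm (X x)"
    using assms(3) by eventually_elim (auto simp: abs_mult intro: mult_left_le_one_le)
qed

lemma integrable_ind:
  assumes "prob_space M" "(indicator S :: 'a \<Rightarrow> real) \<in> borel_measurable M"
  shows "integrable M (indicator S :: 'a \<Rightarrow> real)"
proof -
  interpret prob_space M by fact
  show ?thesis by (rule integrable_const_bound[where B=1]) (use assms in auto)
qed

lemma integrable_ind_mult:
  fixes X :: "'a \<Rightarrow> real"
  assumes "integrable M X" "(indicator S :: 'a \<Rightarrow> real) \<in> borel_measurable M"
  shows "integrable M (\<lambda>x. indicator S x * X x)"
  by (rule integrable_bdd_mult[OF assms]) auto

lemma subalg_vimage: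
  assumes "f \<in> measurable N P"
  shows "subalgebra N (vimage_algebra (space N) f P)"
proof -
  have "(\<lambda>x. x) \<in> measurable N (vimage_algebra (space N) f P)"
    by (rule measurable_vimage_algebra2) (use assms in auto)
  then have "B \<in> sets N" if "B \<in> sets (vimage_algebra (space N) f P)" for B
    using measurable_sets[OF _ that, of "\<lambda>x. x" N] sets.sets_into_space[OF that] 
    by (simp add: Int_absorb2)
  then show ?thesis unfolding subalgebra_def by auto
qed

lemma subalg_trans:
  "subalgebra M G \<Longrightarrow> subalgebra G F \<Longrightarrow> subalgebra M F"
  unfolding subalgebra_def by auto

lemma subalg_meas:
  "subalgebra G F \<Longrightarrow> f \<in> measurable F N \<Longrightarrow> f \<in> measurable G N"
  by (rule measurable_from_subalg)

definition nullH :: "'a measure \<Rightarrow> 'a measure \<Rightarrow> ('a \<Rightarrow> real) \<Rightarrow> bool" where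
  "nullH M H N \<longleftrightarrow> integrable M N \<and> (\<forall>B\<in>sets H. (\<integral>x. indicator B x * N x \<partial>M) = 0)"

lemma nullH_mono: "nullH M H N \<Longrightarrow> sets H' \<subseteq> sets H \<Longrightarrow> nullH M H' N"
  unfolding nullH_def by auto

lemma nullH_diff: "nullH M H N1 \<Longrightarrow> nullH M H N2 \<Longrightarrow> subalgebra M H \<Longrightarrow> nullH M H (\<lambda>x. N1 x - N2 x)"
proof -
  assume a: "nullH M H N1" "nullH M H N2" "subalgebra M H"
  { fix B assume B: "B \<in> sets H"
    then have BM: "B \<in> sets M" using a(3) unfolding subalgebra_def by auto
    have "(\<integral>x. indicator B x * (N1 x - N2 x) \<partial>M) = (\<integral>x. indicator B x * N1 x - indicator B x * N2 x \<partial>M)"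
      by (simp add: right_diff_distrib)
    also have "\<dots> = (\<integral>x. indicator B x * N1 x \<partial>M) - (\<integral>x. indicator B x * N2 x \<partial>M)"
      by (rule Bochner_Integration.integral_diff)
         (use a BM in \<open>auto simp: nullH_def intro!: integrable_ind_mult\<close>)
    also have "\<dots> = 0" using a B unfolding nullH_def by auto
    finally have "(\<integral>x. indicator B x * (N1 x - N2 x) \<partial>M) = 0" . }
  then show ?thesis using a unfolding nullH_def by auto
qed

lemma nullH_zero: "nullH M H (\<lambda>x. 0)"
  unfolding nullH_def by auto

lemma nullH_sum:
  assumes "finite I" "\<And>i. i \<in> I \<Longrightarrow> nullH M H (N i)" "subalgebra M H"
  shows "nullH M H (\<lambda>x. \<Sum>i\<in>I. N i x)"
  using assms
proof (induction I rule: finite_induct)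
  case empty then show ?case by (simp add: nullH_zero)
next
  case (insert a I)
  have h: "nullH M H (\<lambda>x. \<Sum>i\<in>I. N i x)" using insert by auto
  have "nullH M H (\<lambda>x. N a x - (0 - (\<Sum>i\<in>I. N i x)))"
    by (rule nullH_diff[OF _ nullH_diff[OF nullH_zero h]]) (use insert in auto)
  then show ?case using insert by simp
qed

context sigma_finite_subalgebra
begin

lemma nullH_ce:
  assumes "nullH M F N"
  shows "AE x in M. real_cond_exp M F N x = 0"
  by (rule real_cond_exp_charact) (use assms in \<open>auto simp: nullH_def set_lebesgue_integral_def\<close>)

lemma nullH_of_ce:
  assumes "integrable M N" "AE x in M. real_cond_exp M F N x = 0"
  shows "nullH M F N"
  unfolding nullH_def
proof (intro conjI ballI assms)
  fix B assume B: "B \<in> sets F"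
  have "(\<integral>x. indicator B x * N x \<partial>M) = (\<integral>x\<in>B. N x \<partial>M)" by (simp add: set_lebesgue_integral_def)
  also have "\<dots> = (\<integral>x\<in>B. real_cond_exp M F N x \<partial>M)" by (rule real_cond_exp_intA) (use assms B in auto)
  also have "\<dots> = (\<integral>x\<in>B. 0 \<partial>M)"
    unfolding set_lebesgue_integral_def
    by (rule integral_cong_AE) (use assms(2) B subalg in \<open>auto simp: subalgebra_def\<close>)
  finally show "(\<integral>x. indicator B x * N x \<partial>M) = 0" by (simp add: set_lebesgue_integral_def)
qed

lemma ce_add_null:
  assumes "integrable M X" "nullH M F N"
  shows "AE x in M. real_cond_exp M F (\<lambda>x. X x + N x) x = real_cond_exp M F X x"
proof -
  have "AE x in M. real_cond_exp M F (\<lambda>x. X x + N x) x = real_cond_exp M F X x + real_cond_exp M F N x"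
    by (rule real_cond_exp_add) (use assms in \<open>auto simp: nullH_def\<close>)
  with nullH_ce[OF assms(2)] show ?thesis by eventually_elim auto
qed

lemma ce_ind_F:
  assumes "prob_space M" "(indicator S :: 'a \<Rightarrow> real) \<in> borel_measurable F"
  shows "AE x in M. real_cond_exp M F (indicator S) x = indicator S x"
  by (rule real_cond_exp_F_meas)
     (use assms integrable_ind measurable_from_subalg[OF subalg] in auto)

lemma condE_on_F:
  assumes "prob_space M" "(indicator S :: 'a \<Rightarrow> real) \<in> borel_measurable F"
  shows "AE x in M. x \<in> S \<longrightarrow> condE_on M S F X x = real_cond_exp M F (\<lambda>x. indicator S x * X x) x"
  using ce_ind_F[OF assms] by eventually_elim (auto simp: condE_on_def)

lemma ce_outside:
  assumes "(indicator S :: 'a \<Rightarrow> real) \<in> borel_measurable F" "integrable M X"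
  shows "AE x in M. x \<notin> S \<longrightarrow> real_cond_exp M F (\<lambda>x. indicator S x * X x) x = 0"
proof -
  have SM: "(indicator S :: 'a \<Rightarrow> real) \<in> borel_measurable M"
    using assms measurable_from_subalg[OF subalg] by auto
  have i1: "integrable M (\<lambda>x. indicator S x * X x)" by (rule integrable_ind_mult[OF assms(2) SM])
  have "AE x in M. real_cond_exp M F (\<lambda>x. indicator S x * (indicator S x * X x)) x
      = indicator S x * real_cond_exp M F (\<lambda>x. indicator S x * X x) x"
    by (rule real_cond_exp_mult) (use assms(1) i1 integrable_ind_mult[OF i1 SM] in auto)
  moreover have "AE x in M. real_cond_exp M F (\<lambda>x. indicator S x * (indicator S x * X x)) x
      = real_cond_exp M F (\<lambda>x. indicator S x * X x) x"
    by (rule real_cond_exp_cong) (use i1 integrable_ind_mult[OF i1 SM] in \<open>auto simp: indicator_def\<close>)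
  ultimately show ?thesis by eventually_elim auto
qed

end


lemma trace_ce:
  fixes W :: "'a \<Rightarrow> real"
  assumes P: "prob_space M" and sMF: "subalgebra M F" and sMG: "subalgebra M G" and sGF: "subalgebra G F"
    and S: "(indicator S :: 'a \<Rightarrow> real) \<in> borel_measurable G"
    and tr: "\<And>B. B \<in> sets G \<Longrightarrow> \<exists>B'\<in>sets F. \<forall>x\<in>space M. x \<in> S \<longrightarrow> (x \<in> B \<longleftrightarrow> x \<in> B')"
    and W: "integrable M W"
  shows "AE x in M. x \<in> S \<longrightarrow> real_cond_exp M F (indicator S) x * real_cond_exp M G (\<lambda>x. indicator S x * W x) x
            = real_cond_exp M F (\<lambda>x. indicator S x * W x) x"
proof -
  interpret F: sigma_finite_subalgebra M F by (rule sfs[OF P sMF])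
  interpret G: sigma_finite_subalgebra M G by (rule sfs[OF P sMG])
  define p where "p = real_cond_exp M F (indicator S)"
  define g where "g = real_cond_exp M G (\<lambda>x. indicator S x * W x)"
  define f where "f = real_cond_exp M F (\<lambda>x. indicator S x * W x)"
  have SM: "(indicator S :: 'a \<Rightarrow> real) \<in> borel_measurable M" using S measurable_from_subalg[OF sMG] by auto
  have iS: "integrable M (indicator S :: 'a \<Rightarrow> real)" by (rule integrable_ind[OF P SM])
  have iSW: "integrable M (\<lambda>x. indicator S x * W x)" by (rule integrable_ind_mult[OF W SM])
  have pF: "p \<in> borel_measurable F" unfolding p_def by simp
  have pG: "p \<in> borel_measurable G" using measurable_from_subalg[OF sGF pF] .
  have pM: "p \<in> borel_measurable M" unfolding p_def by simp
  have fF: "f \<in> borel_measurable F" unfolding f_def by simp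
  have fG: "f \<in> borel_measurable G" using measurable_from_subalg[OF sGF fF] .
  have fM: "f \<in> borel_measurable M" unfolding f_def by simp
  have gG: "g \<in> borel_measurable G" unfolding g_def by simp
  have gM: "g \<in> borel_measurable M" unfolding g_def by simp
  have p0: "AE x in M. p x \<ge> 0" unfolding p_def by (rule F.real_cond_exp_ge_c[OF iS]) auto
  have p1: "AE x in M. p x \<le> 1" unfolding p_def by (rule F.real_cond_exp_le_c[OF iS]) auto
  have pb: "AE x in M. \<bar>p x\<bar> \<le> 1" using p0 p1 by eventually_elim auto
  have g_int: "integrable M g" unfolding g_def by (rule G.real_cond_exp_int(1)[OF iSW])
  have f_int: "integrable M f" unfolding f_def by (rule F.real_cond_exp_int(1)[OF iSW])
  define h where "h = (\<lambda>x. indicator S x * p x * g x)"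
  have hG: "h \<in> borel_measurable G" unfolding h_def using S pG gG by measurable
  have h_int: "integrable M h"
  proof -
    have m: "(\<lambda>x. indicator S x * p x) \<in> borel_measurable M" using SM pM by measurable
    have b: "AE x in M. \<bar>indicator S x * p x\<bar> \<le> 1" using pb by eventually_elim (auto simp: indicator_def)
    show ?thesis using integrable_bdd_mult[OF g_int m b] unfolding h_def by simp
  qed
  have r_int: "integrable M (\<lambda>x. indicator S x * f x)" by (rule integrable_ind_mult[OF f_int SM])
  have rG: "(\<lambda>x. indicator S x * f x) \<in> borel_measurable G" using S fG by measurable
  have "AE x in M. real_cond_exp M G h x = indicator S x * f x"
  proof (rule G.real_cond_exp_charact[OF _ h_int r_int rG])
    fix B assume B: "B \<in> sets G"
    obtain B' where B': "B' \<in> sets F" "\<forall>x\<in>space M. x \<in> S \<longrightarrow> (x \<in> B \<longleftrightarrow> x \<in> B')" using tr[OF B] by blast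
    have B'G: "B' \<in> sets G" using B' sGF unfolding subalgebra_def by auto
    have B'M: "B' \<in> sets M" using B'G sMG unfolding subalgebra_def by auto
    have iB'G: "(indicator B' :: 'a \<Rightarrow> real) \<in> borel_measurable G" using B'G by simp
    have iB'F: "(indicator B' :: 'a \<Rightarrow> real) \<in> borel_measurable F" using B' by simp
    have iB'M: "(indicator B' :: 'a \<Rightarrow> real) \<in> borel_measurable M" using B'M by simp
    have "(\<integral>x\<in>B. h x \<partial>M) = (\<integral>x. (indicator B' x * indicator S x * p x) * g x \<partial>M)"
      unfolding set_lebesgue_integral_def h_def
      by (rule Bochner_Integration.integral_cong) (use B' in \<open>auto simp: indicator_def\<close>)
    also have "\<dots> = (\<integral>x. (indicator B' x * indicator S x * p x) * (indicator S x * W x) \<partial>M)"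
    proof -
      have m: "(\<lambda>x. indicator B' x * indicator S x * p x) \<in> borel_measurable G" using iB'G S pG by measurable
      have mM: "(\<lambda>x. indicator B' x * indicator S x * p x) \<in> borel_measurable M" using iB'M SM pM by measurable
      have b: "AE x in M. \<bar>indicator B' x * indicator S x * p x\<bar> \<le> 1" using pb by eventually_elim (auto simp: indicator_def)
      show ?thesis unfolding g_def
        by (rule G.real_cond_exp_intg(2)[OF integrable_bdd_mult[OF iSW mM b] m]) (use SM W in measurable)
    qed
    also have "\<dots> = (\<integral>x. (indicator B' x * p x) * (indicator S x * W x) \<partial>M)"
      by (rule Bochner_Integration.integral_cong) (auto simp: indicator_def)
    also have "\<dots> = (\<integral>x. (indicator B' x * p x) * f x \<partial>M)"
    proof -
      have m: "(\<lambda>x. indicator B' x * p x) \<in> borel_measurable F" using iB'F pF by measurable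
      have mM: "(\<lambda>x. indicator B' x * p x) \<in> borel_measurable M" using iB'M pM by measurable
      have b: "AE x in M. \<bar>indicator B' x * p x\<bar> \<le> 1" using pb by eventually_elim (auto simp: indicator_def)
      show ?thesis unfolding f_def
        by (rule F.real_cond_exp_intg(2)[OF integrable_bdd_mult[OF iSW mM b] m, symmetric]) (use SM W in measurable)
    qed
    also have "\<dots> = (\<integral>x. (indicator B' x * f x) * p x \<partial>M)"
      by (simp add: mult_ac)
    also have "\<dots> = (\<integral>x. (indicator B' x * f x) * indicator S x \<partial>M)"
    proof -
      have i: "integrable M (\<lambda>x. indicator S x * (indicator B' x * f x))"
        by (rule integrable_ind_mult[OF _ SM]) (rule integrable_ind_mult[OF f_int iB'M])
      show ?thesis unfolding p_def
        by (rule F.real_cond_exp_intg(2)) (use i SM iB'F fF in \<open>auto simp: mult_ac\<close>)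
    qed
    also have "\<dots> = (\<integral>x\<in>B. indicator S x * f x \<partial>M)"
      unfolding set_lebesgue_integral_def
      by (rule Bochner_Integration.integral_cong) (use B' in \<open>auto simp: indicator_def\<close>)
    finally show "(\<integral>x\<in>B. h x \<partial>M) = (\<integral>x\<in>B. indicator S x * f x \<partial>M)" .
  qed
  moreover have "AE x in M. real_cond_exp M G h x = h x" by (rule G.real_cond_exp_F_meas[OF h_int hG])
  ultimately show ?thesis unfolding h_def p_def g_def f_def by eventually_elim (auto simp: mult_ac)
qed



locale L3 =
  fixes M :: "'a measure" and Mz :: "'z measure" and K :: nat
    and Z :: "nat \<Rightarrow> 'a \<Rightarrow> 'z" and Y A Yinf :: "nat \<Rightarrow> 'a \<Rightarrow> real"
    and Ycf :: "nat \<Rightarrow> nat \<Rightarrow> real \<Rightarrow> 'a \<Rightarrow> real"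
    and gstar :: "nat \<Rightarrow> nat \<Rightarrow> ((nat \<Rightarrow> 'z) \<times> (nat \<Rightarrow> real) \<times> (nat \<Rightarrow> real)) \<times> real \<Rightarrow> real"
    and T :: "'a \<Rightarrow> enat"
  assumes T_def: "T = Tinit K A"
  assumes prob: "prob_space M"
    and Z_meas: "\<And>m. m \<le> K \<Longrightarrow> Z m \<in> measurable M Mz"
    and A_meas: "\<And>m. m \<le> K \<Longrightarrow> A m \<in> borel_measurable M"
    and Y_int: "\<And>k. k \<le> K \<Longrightarrow> integrable M (Y k)"
    and Yinf_int: "\<And>k. k \<le> K \<Longrightarrow> integrable M (Yinf k)"
    and Ycf_int: "\<And>m k. m < k \<Longrightarrow> k \<le> K \<Longrightarrow> integrable M (\<lambda>\<omega>. Ycf k m (A m \<omega>) \<omega>)"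
    and cons1: "\<And>k \<omega>. k \<le> K \<Longrightarrow> \<omega> \<in> space M \<Longrightarrow> T \<omega> < enat k \<Longrightarrow>
                  Y k \<omega> = Ycf k (the_enat (T \<omega>)) (A (the_enat (T \<omega>)) \<omega>) \<omega>"
    and cons2: "\<And>k \<omega>. k \<le> K \<Longrightarrow> \<omega> \<in> space M \<Longrightarrow> T \<omega> \<ge> enat k \<Longrightarrow> Y k \<omega> = Yinf k \<omega>"
    and cf_early: "\<And>k m a \<omega>. k \<le> m \<Longrightarrow> \<omega> \<in> space M \<Longrightarrow> Ycf k m a \<omega> = Yinf k \<omega>"
    and positivity: "\<And>m. m \<le> K \<Longrightarrow> AE \<omega> in M. T \<omega> \<ge> enat m \<longrightarrow>
                  condE_on M {x. T x \<ge> enat m} (sigL M Mz Z Y A m) (indicator {x. A m x = 0}) \<omega> > 0"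
    and parallel: "\<And>m k. m < k \<Longrightarrow> k \<le> K \<Longrightarrow> AE \<omega> in M. T \<omega> = enat m \<longrightarrow>
                  condE_on M {x. T x = enat m} (sigLA M Mz Z Y A m) (\<lambda>x. Yinf k x - Yinf (k - 1) x) \<omega>
                = condE_on M {x. T x > enat m} (sigL M Mz Z Y A m) (\<lambda>x. Yinf k x - Yinf (k - 1) x) \<omega>"
    and gstar_meas: "\<And>m k. m < k \<Longrightarrow> k \<le> K \<Longrightarrow> gstar m k \<in> borel_measurable (LM Mz m \<Otimes>\<^sub>M borel)"
    and gstar_blip: "\<And>m k. m < k \<Longrightarrow> k \<le> K \<Longrightarrow> AE \<omega> in M. T \<omega> = enat m \<longrightarrow>
                  gstar m k (Lbar Z Y A m \<omega>, A m \<omega>)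
                = condE_on M {x. T x = enat m} (sigLA M Mz Z Y A m) (\<lambda>x. Ycf k m (A m x) x - Yinf k x) \<omega>"
begin

abbreviation "F m \<equiv> sigL M Mz Z Y A m"
abbreviation "G m \<equiv> sigLA M Mz Z Y A m"
abbreviation "LA m \<equiv> (\<lambda>x. (Lbar Z Y A m x, A m x))"

subsection \<open>Initiation time\<close>

lemma T_enat_iff: "T x = enat t \<longleftrightarrow> t \<le> K \<and> A t x \<noteq> 0 \<and> (\<forall>i<t. A i x = 0)"
proof
  assume h: "T x = enat t"
  then have ex: "\<exists>m\<le>K. A m x \<noteq> 0" and t: "t = (LEAST m. A m x \<noteq> 0)"
    unfolding T_def Tinit_def by (auto split: if_splits)
  then obtain m where m: "m \<le> K" "A m x \<noteq> 0" by auto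
  have "A t x \<noteq> 0" using t m by (metis (mono_tags, lifting) LeastI)
  moreover have "t \<le> m" using t m by (simp add: Least_le)
  moreover have "\<forall>i<t. A i x = 0" using t not_less_Least by blast
  ultimately show "t \<le> K \<and> A t x \<noteq> 0 \<and> (\<forall>i<t. A i x = 0)" using m by auto
next
  assume h: "t \<le> K \<and> A t x \<noteq> 0 \<and> (\<forall>i<t. A i x = 0)"
  then have "(LEAST m. A m x \<noteq> 0) = t"
    by (intro Least_equality) (auto simp: not_less[symmetric])
  then show "T x = enat t" using h unfolding T_def Tinit_def by auto
qed

lemma T_inf_iff: "T x = \<infinity> \<longleftrightarrow> (\<forall>i\<le>K. A i x = 0)"
  unfolding T_def Tinit_def by auto

lemma T_ge_iff: "m \<le> K \<Longrightarrow> enat m \<le> T x \<longleftrightarrow> (\<forall>i<m. A i x = 0)"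
proof (cases "T x")
  case (enat t)
  then have t: "t \<le> K" "A t x \<noteq> 0" "\<forall>i<t. A i x = 0" using T_enat_iff by auto
  show ?thesis using enat t by (auto simp: not_less[symmetric])
next
  case infinity
  have "\<forall>i\<le>K. A i x = 0" using infinity T_inf_iff by auto
  moreover assume "m \<le> K"
  ultimately show ?thesis using infinity by auto
qed

lemma T_gt_iff: "m \<le> K \<Longrightarrow> enat m < T x \<longleftrightarrow> (\<forall>i\<le>m. A i x = 0)"
proof (cases "T x")
  case (enat t)
  then have t: "t \<le> K" "A t x \<noteq> 0" "\<forall>i<t. A i x = 0" using T_enat_iff by auto
  show ?thesis using enat t by (auto simp: not_less[symmetric] le_less)
next
  case infinity
  have "\<forall>i\<le>K. A i x = 0" using infinity T_inf_iff by auto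
  moreover assume "m \<le> K"
  ultimately show ?thesis using infinity by auto
qed

lemma T_eq_iff: "m \<le> K \<Longrightarrow> T x = enat m \<longleftrightarrow> (\<forall>i<m. A i x = 0) \<and> A m x \<noteq> 0"
  using T_enat_iff by auto

lemma Y_meas: "k \<le> K \<Longrightarrow> Y k \<in> borel_measurable M"
  using Y_int by auto

lemma Lbar_eq: "Lbar Z Y A m = (\<lambda>x. (restrict (\<lambda>j. Z j x) {..m}, restrict (\<lambda>j. Y j x) {..<m}, restrict (\<lambda>j. A j x) {..<m}))"
  by (auto simp: Lbar_def fun_eq_iff)

lemma Lbar_space: "m \<le> K \<Longrightarrow> x \<in> space M \<Longrightarrow> Lbar Z Y A m x \<in> space (LM Mz m)"
  unfolding Lbar_def LM_def space_pair_measure space_PiM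
  using measurable_space[OF Z_meas] by auto

lemma Lbar_meas: "m \<le> K \<Longrightarrow> Lbar Z Y A m \<in> measurable M (LM Mz m)"
  unfolding Lbar_eq LM_def
  by (intro measurable_Pair measurable_restrict) (auto intro: Z_meas A_meas Y_meas)

lemma LA_meas: "m \<le> K \<Longrightarrow> LA m \<in> measurable M (LM Mz m \<Otimes>\<^sub>M borel)"
  by (intro measurable_Pair Lbar_meas A_meas)

lemma sub_F: "m \<le> K \<Longrightarrow> subalgebra M (F m)"
  unfolding sigL_def by (rule subalg_vimage[OF Lbar_meas])

lemma sub_G: "m \<le> K \<Longrightarrow> subalgebra M (G m)"
  unfolding sigLA_def by (rule subalg_vimage[OF LA_meas])

lemma space_G[simp]: "space (G m) = space M" by (simp add: sigLA_def)
lemma space_F[simp]: "space (F m) = space M" by (simp add: sigL_def)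

lemma LA_meas_G: "m \<le> K \<Longrightarrow> LA m \<in> measurable (G m) (LM Mz m \<Otimes>\<^sub>M borel)"
  unfolding sigLA_def
  by (rule measurable_vimage_algebra1) (auto simp: space_pair_measure Lbar_space)

lemma L_meas_F: "m \<le> K \<Longrightarrow> Lbar Z Y A m \<in> measurable (F m) (LM Mz m)"
  unfolding sigL_def
  by (rule measurable_vimage_algebra1) (auto simp: Lbar_space)

lemma L_meas_G: "m \<le> K \<Longrightarrow> Lbar Z Y A m \<in> measurable (G m) (LM Mz m)"
  using measurable_compose[OF LA_meas_G measurable_fst] by simp

lemma A_meas_G: "m \<le> K \<Longrightarrow> A m \<in> borel_measurable (G m)"
  using measurable_compose[OF LA_meas_G measurable_snd] by simp

lemma sub_GF: "m \<le> K \<Longrightarrow> subalgebra (G m) (F m)"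
  using subalg_vimage[OF L_meas_G] unfolding sigL_def by simp

lemma LA_meas_Gj:
  assumes "m \<le> j" "j \<le> K"
  shows "LA m \<in> measurable (G j) (LM Mz m \<Otimes>\<^sub>M borel)"
proof (cases "m = j")
  case True then show ?thesis using LA_meas_G assms by simp
next
  case False
  then have mj: "m < j" using assms by auto
  define \<phi> where "\<phi> = (\<lambda>p :: ((nat \<Rightarrow> 'z) \<times> (nat \<Rightarrow> real) \<times> (nat \<Rightarrow> real)) \<times> real.
     ((restrict (fst (fst p)) {..m}, restrict (fst (snd (fst p))) {..<m}, restrict (snd (snd (fst p))) {..<m}), snd (snd (fst p)) m))"
  have r1: "(\<lambda>f. restrict f {..m}) \<in> measurable (\<Pi>\<^sub>M i\<in>{..j}. Mz) (\<Pi>\<^sub>M i\<in>{..m}. Mz)"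
    by (rule measurable_restrict_subset) (use mj in auto)
  have r2: "(\<lambda>f. restrict f {..<m}) \<in> measurable (\<Pi>\<^sub>M i\<in>{..<j}. (borel::real measure)) (\<Pi>\<^sub>M i\<in>{..<m}. (borel::real measure))"
    by (rule measurable_restrict_subset) (use mj in auto)
  have c: "(\<lambda>f. f m) \<in> measurable (\<Pi>\<^sub>M i\<in>{..<j}. (borel::real measure)) borel"
    by (rule measurable_component_singleton) (use mj in auto)
  note [measurable] = r1 r2 c
  have \<phi>m: "\<phi> \<in> measurable (LM Mz j \<Otimes>\<^sub>M borel) (LM Mz m \<Otimes>\<^sub>M borel)"
    unfolding \<phi>_def LM_def by measurable
  have eq: "LA m x = \<phi> (LA j x)" for x
    unfolding \<phi>_def Lbar_def using mj by (auto simp: fun_eq_iff restrict_def)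
  show ?thesis
    using measurable_compose[OF LA_meas_G[OF assms(2)] \<phi>m] by (simp add: eq[symmetric])
qed

lemma sub_GG: "m \<le> j \<Longrightarrow> j \<le> K \<Longrightarrow> subalgebra (G j) (G m)"
  using subalg_vimage[OF LA_meas_Gj] unfolding sigLA_def by simp

lemma sets_GG: "m \<le> j \<Longrightarrow> j \<le> K \<Longrightarrow> sets (G m) \<subseteq> sets (G j)"
  using sub_GG unfolding subalgebra_def by auto

lemma sets_FG: "m \<le> K \<Longrightarrow> sets (F m) \<subseteq> sets (G m)"
  using sub_GF unfolding subalgebra_def by auto

end


context L3
begin

lemma ind_eq_G:
  assumes "m \<le> K" shows "(indicator {x. T x = enat m} :: 'a \<Rightarrow> real) \<in> borel_measurable (G m)"
proof -
  define \<psi> where "\<psi> = (\<lambda>p :: ((nat \<Rightarrow> 'z) \<times> (nat \<Rightarrow> real) \<times> (nat \<Rightarrow> real)) \<times> real.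
     if (\<forall>i\<in>{..<m}. snd (snd (fst p)) i = 0) \<and> snd p \<noteq> 0 then 1 else (0::real))"
  have "\<psi> \<in> borel_measurable (LM Mz m \<Otimes>\<^sub>M borel)" unfolding \<psi>_def LM_def by measurable
  then have "(\<lambda>x. \<psi> (LA m x)) \<in> borel_measurable (G m)" using measurable_compose[OF LA_meas_G[OF assms]] by auto
  moreover have "\<psi> (LA m x) = indicator {x. T x = enat m} x" for x
    using T_eq_iff[OF assms, of x] by (auto simp: \<psi>_def Lbar_def indicator_def)
  ultimately show ?thesis by simp
qed

lemma ind_ge_F:
  assumes "m \<le> K" shows "(indicator {x. enat m \<le> T x} :: 'a \<Rightarrow> real) \<in> borel_measurable (F m)"
proof -
  define \<psi> where "\<psi> = (\<lambda>l :: (nat \<Rightarrow> 'z) \<times> (nat \<Rightarrow> real) \<times> (nat \<Rightarrow> real).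
     if (\<forall>i\<in>{..<m}. snd (snd l) i = 0) then 1 else (0::real))"
  have "\<psi> \<in> borel_measurable (LM Mz m)" unfolding \<psi>_def LM_def by measurable
  then have "(\<lambda>x. \<psi> (Lbar Z Y A m x)) \<in> borel_measurable (F m)" using measurable_compose[OF L_meas_F[OF assms]] by auto
  moreover have "\<psi> (Lbar Z Y A m x) = indicator {x. enat m \<le> T x} x" for x
    using T_ge_iff[OF assms, of x] by (auto simp: \<psi>_def Lbar_def indicator_def)
  ultimately show ?thesis by simp
qed

lemma ind_gt_G:
  assumes "m \<le> K" shows "(indicator {x. enat m < T x} :: 'a \<Rightarrow> real) \<in> borel_measurable (G m)"
proof -
  define \<psi> where "\<psi> = (\<lambda>p :: ((nat \<Rightarrow> 'z) \<times> (nat \<Rightarrow> real) \<times> (nat \<Rightarrow> real)) \<times> real.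
     if (\<forall>i\<in>{..<m}. snd (snd (fst p)) i = 0) \<and> snd p = 0 then 1 else (0::real))"
  have "\<psi> \<in> borel_measurable (LM Mz m \<Otimes>\<^sub>M borel)" unfolding \<psi>_def LM_def by measurable
  then have "(\<lambda>x. \<psi> (LA m x)) \<in> borel_measurable (G m)" using measurable_compose[OF LA_meas_G[OF assms]] by auto
  moreover have "\<psi> (LA m x) = indicator {x. enat m < T x} x" for x
    using T_gt_iff[OF assms, of x] by (auto simp: \<psi>_def Lbar_def indicator_def le_less)
  ultimately show ?thesis by simp
qed

lemma ind_ge_G: "m \<le> K \<Longrightarrow> (indicator {x. enat m \<le> T x} :: 'a \<Rightarrow> real) \<in> borel_measurable (G m)"
  using measurable_from_subalg[OF sub_GF ind_ge_F] .

lemma G_M: "m \<le> K \<Longrightarrow> f \<in> borel_measurable (G m) \<Longrightarrow> f \<in> borel_measurable M"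
  using measurable_from_subalg[OF sub_G] .

lemma trace_G:
  assumes mK: "m \<le> K" and B: "B \<in> sets (G m)"
  shows "\<exists>B'\<in>sets (F m). \<forall>x\<in>space M. x \<in> {x. enat m < T x} \<longrightarrow> (x \<in> B \<longleftrightarrow> x \<in> B')"
proof -
  have Pi: "LA m \<in> space M \<rightarrow> space (LM Mz m \<Otimes>\<^sub>M borel)" by (auto simp: space_pair_measure Lbar_space[OF mK])
  obtain C where C: "C \<in> sets (LM Mz m \<Otimes>\<^sub>M borel)" "B = LA m -` C \<inter> space M"
    using B sets_vimage_algebra2[OF Pi] unfolding sigLA_def by auto
  define C0 where "C0 = (\<lambda>l. (l, 0::real)) -` C \<inter> space (LM Mz m)"
  have "(\<lambda>l. (l, 0::real)) \<in> measurable (LM Mz m) (LM Mz m \<Otimes>\<^sub>M borel)" by measurable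
  then have C0: "C0 \<in> sets (LM Mz m)" unfolding C0_def using measurable_sets C(1) by blast
  define B' where "B' = Lbar Z Y A m -` C0 \<inter> space M"
  have "B' \<in> sets (F m)" unfolding B'_def sigL_def by (rule in_vimage_algebra[OF C0])
  moreover have "x \<in> B \<longleftrightarrow> x \<in> B'" if "x \<in> space M" "enat m < T x" for x
  proof -
    have "A m x = 0" using that T_gt_iff[OF mK] by auto
    then show ?thesis using that Lbar_space[OF mK] unfolding C B'_def C0_def by auto
  qed
  ultimately show ?thesis by auto
qed

lemma Yinf_meas: "k \<le> K \<Longrightarrow> Yinf k \<in> borel_measurable M" using Yinf_int by auto

lemma gstar_int:
  assumes jl: "j < l" "l \<le> K"
  shows "integrable M (\<lambda>x. gstar j l (LA j x) * indicator {x. T x = enat j} x)"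
proof -
  have jK: "j \<le> K" using jl by auto
  interpret Gj: sigma_finite_subalgebra M "G j" by (rule sfs[OF prob sub_G[OF jK]])
  define V where "V = (\<lambda>x. Ycf l j (A j x) x - Yinf l x)"
  have V_int: "integrable M V" unfolding V_def using Ycf_int[OF jl] Yinf_int[of l] jl by auto
  have iG: "(indicator {x. T x = enat j} :: 'a \<Rightarrow> real) \<in> borel_measurable (G j)" by (rule ind_eq_G[OF jK])
  have iM: "(indicator {x. T x = enat j} :: 'a \<Rightarrow> real) \<in> borel_measurable M" by (rule G_M[OF jK iG])
  have r_int: "integrable M (\<lambda>x. indicator {x. T x = enat j} x * real_cond_exp M (G j) (\<lambda>x. indicator {x. T x = enat j} x * V x) x)"
    by (rule integrable_ind_mult[OF Gj.real_cond_exp_int(1)[OF integrable_ind_mult[OF V_int iM]] iM])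
  have ae: "AE x in M. gstar j l (LA j x) * indicator {x. T x = enat j} x
      = indicator {x. T x = enat j} x * real_cond_exp M (G j) (\<lambda>x. indicator {x. T x = enat j} x * V x) x"
    using gstar_blip[OF jl] Gj.condE_on_F[OF prob iG, of V]
    by eventually_elim (auto simp: V_def indicator_def)
  have m: "(\<lambda>x. gstar j l (LA j x) * indicator {x. T x = enat j} x) \<in> borel_measurable M"
    using measurable_compose[OF LA_meas[OF jK] gstar_meas[OF jl]] iM by measurable
  show ?thesis using integrable_cong_AE[OF m _ ae] r_int by simp
qed

definition Ug :: "(nat \<Rightarrow> nat \<Rightarrow> ((nat \<Rightarrow> 'z) \<times> (nat \<Rightarrow> real) \<times> (nat \<Rightarrow> real)) \<times> real \<Rightarrow> real) \<Rightarrow> nat \<Rightarrow> nat \<Rightarrow> 'a \<Rightarrow> real" where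
  "Ug g j l x = Ycf l j (A j x) x - Yinf l x - g j l (LA j x)"

definition Rg :: "(nat \<Rightarrow> nat \<Rightarrow> ((nat \<Rightarrow> 'z) \<times> (nat \<Rightarrow> real) \<times> (nat \<Rightarrow> real)) \<times> real \<Rightarrow> real) \<Rightarrow> nat \<Rightarrow> nat \<Rightarrow> 'a \<Rightarrow> real" where
  "Rg g k j x = indicator {x. T x = enat j} x * (Ug g j k x - (if j < k - 1 then Ug g j (k - 1) x else 0))"

lemma Xn_null:
  assumes jl: "j < l" "l \<le> K"
  shows "nullH M (G j) (\<lambda>x. indicator {x. T x = enat j} x * Ug gstar j l x)"
proof -
  have jK: "j \<le> K" using jl by auto
  interpret Gj: sigma_finite_subalgebra M "G j" by (rule sfs[OF prob sub_G[OF jK]])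
  define V where "V = (\<lambda>x. Ycf l j (A j x) x - Yinf l x)"
  define I where "I = (indicator {x. T x = enat j} :: 'a \<Rightarrow> real)"
  define H where "H = (\<lambda>x. gstar j l (LA j x) * I x)"
  have V_int: "integrable M V" unfolding V_def using Ycf_int[OF jl] Yinf_int[of l] jl by auto
  have iG: "I \<in> borel_measurable (G j)" unfolding I_def by (rule ind_eq_G[OF jK])
  have iM: "I \<in> borel_measurable M" by (rule G_M[OF jK iG])
  have H_int: "integrable M H" unfolding H_def I_def by (rule gstar_int[OF jl])
  have HG: "H \<in> borel_measurable (G j)" unfolding H_def
    using measurable_compose[OF LA_meas_G[OF jK] gstar_meas[OF jl]] iG by measurable
  have IV_int: "integrable M (\<lambda>x. I x * V x)" unfolding I_def by (rule integrable_ind_mult[OF V_int iM[unfolded I_def]])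
  have eq: "(\<lambda>x. indicator {x. T x = enat j} x * Ug gstar j l x) = (\<lambda>x. I x * V x - H x)"
    by (auto simp: fun_eq_iff I_def V_def H_def Ug_def algebra_simps)
  have "AE x in M. real_cond_exp M (G j) (\<lambda>x. I x * V x - H x) x = real_cond_exp M (G j) (\<lambda>x. I x * V x) x - real_cond_exp M (G j) H x"
    by (rule Gj.real_cond_exp_diff[OF IV_int H_int])
  moreover have "AE x in M. real_cond_exp M (G j) H x = H x" by (rule Gj.real_cond_exp_F_meas[OF H_int HG])
  moreover have "AE x in M. x \<notin> {x. T x = enat j} \<longrightarrow> real_cond_exp M (G j) (\<lambda>x. I x * V x) x = 0"
    unfolding I_def by (rule Gj.ce_outside[OF ind_eq_G[OF jK] V_int])
  moreover have "AE x in M. x \<in> {x. T x = enat j} \<longrightarrow> condE_on M {x. T x = enat j} (G j) V x = real_cond_exp M (G j) (\<lambda>x. I x * V x) x"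
    unfolding I_def by (rule Gj.condE_on_F[OF prob ind_eq_G[OF jK]])
  moreover note gstar_blip[OF jl]
  ultimately have "AE x in M. real_cond_exp M (G j) (\<lambda>x. I x * V x - H x) x = 0"
    by eventually_elim (auto simp: H_def I_def V_def indicator_def)
  then show ?thesis unfolding eq
    by (intro Gj.nullH_of_ce Bochner_Integration.integrable_diff IV_int H_int)
qed

lemma Rg_null:
  assumes "m \<le> j" "j < k" "k \<le> K"
  shows "nullH M (G j) (Rg gstar k j)"
proof (cases "j < k - 1")
  case True
  have "nullH M (G j) (\<lambda>x. indicator {x. T x = enat j} x * Ug gstar j k x - indicator {x. T x = enat j} x * Ug gstar j (k-1) x)"
    by (rule nullH_diff[OF Xn_null Xn_null sub_G]) (use True assms in auto)
  then show ?thesis using True unfolding Rg_def by (simp add: right_diff_distrib)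
next
  case False
  then show ?thesis using Xn_null[of j k] assms unfolding Rg_def by simp
qed

subsection \<open>Pointwise decomposition\<close>

lemma sum_collapse:
  fixes f :: "nat \<Rightarrow> real"
  assumes "finite I"
  shows "(\<Sum>j\<in>I. f j * indicator {x. T x = enat j} x) = (if T x \<in> enat ` I then f (the_enat (T x)) else 0)"
proof (cases "T x \<in> enat ` I")
  case True
  then obtain t where t: "t \<in> I" "T x = enat t" by auto
  have "(\<Sum>j\<in>I. f j * indicator {x. T x = enat j} x) = (\<Sum>j\<in>I. if j = t then f j else 0)"
    by (rule sum.cong) (auto simp: t indicator_def)
  also have "\<dots> = f t" using t assms by simp
  finally show ?thesis using t by simp
next
  case False
  then have "(\<Sum>j\<in>I. f j * indicator {x. T x = enat j} x) = 0"
    by (intro sum.neutral) (auto simp: indicator_def)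
  then show ?thesis using False by simp
qed

lemma decomp:
  assumes x: "x \<in> space M" and ms: "m \<le> s" "s \<le> k" and mk: "m < k" "k \<le> K"
  shows "indicator {x. enat s \<le> T x} x * (Hc Y A (Lbar Z Y A) T g m k x - Hc Y A (Lbar Z Y A) T g m (k-1) x)
       = indicator {x. enat s \<le> T x} x * (Yinf k x - Yinf (k-1) x) + (\<Sum>j\<in>{s..<k}. Rg g k j x)"
proof -
  have RgS: "(\<Sum>j\<in>{s..<k}. Rg g k j x) = (if T x \<in> enat ` {s..<k} then
      (Ug g (the_enat (T x)) k x - (if the_enat (T x) < k - 1 then Ug g (the_enat (T x)) (k - 1) x else 0)) else 0)"
    unfolding Rg_def using sum_collapse[of "{s..<k}" "\<lambda>j. Ug g j k x - (if j < k - 1 then Ug g j (k - 1) x else 0)" x]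
    by (simp add: mult.commute)
  have H1: "Hc Y A (Lbar Z Y A) T g m k x = Y k x - (if T x \<in> enat ` {m..<k} then g (the_enat (T x)) k (LA (the_enat (T x)) x) else 0)"
    unfolding Hc_def using sum_collapse[of "{m..<k}" "\<lambda>j. g j k (LA j x)" x] by simp
  have H2: "Hc Y A (Lbar Z Y A) T g m (k-1) x = Y (k-1) x - (if T x \<in> enat ` {m..<k-1} then g (the_enat (T x)) (k-1) (LA (the_enat (T x)) x) else 0)"
    unfolding Hc_def using sum_collapse[of "{m..<k-1}" "\<lambda>j. g j (k-1) (LA j x)" x] by simp
  have "T x < enat s \<or> (\<exists>t. T x = enat t \<and> s \<le> t \<and> t < k) \<or> enat k \<le> T x"
    by (cases "T x") (auto simp: not_less)
  then consider (lt) "T x < enat s" | (mid) t where "T x = enat t" "s \<le> t" "t < k" | (ge) "enat k \<le> T x"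
    by blast
  then show ?thesis
  proof cases
    case lt
    then have "T x \<notin> enat ` {s..<k}" by auto
    then show ?thesis using lt RgS by (simp add: indicator_def not_le)
  next
    case (mid t)
    have Yk: "Y k x = Ycf k t (A t x) x" using cons1[OF mk(2) x] mid by simp
    have ind: "indicator {x. enat s \<le> T x} x = (1::real)" using mid by (simp add: indicator_def)
    show ?thesis
    proof (cases "t < k - 1")
      case True
      have Yk1: "Y (k-1) x = Ycf (k-1) t (A t x) x" using cons1[of "k-1" x] mk x mid True by simp
      show ?thesis using mid ms True unfolding RgS H1 H2 ind Yk Yk1 by (simp add: Ug_def image_iff)
    next
      case False
      then have t: "t = k - 1" using mid by auto
      have Yk1: "Y (k-1) x = Yinf (k-1) x" using cons2[of "k-1" x] mk x mid t by simp
      show ?thesis using mid ms t unfolding RgS H1 H2 ind Yk Yk1 by (simp add: Ug_def image_iff)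
    qed
  next
    case ge
    have Yk: "Y k x = Yinf k x" using cons2[OF mk(2) x ge] .
    have Yk1: "Y (k-1) x = Yinf (k-1) x" using cons2[of "k-1" x] mk x ge by (simp add: order_trans[OF _ ge])
    have ind: "indicator {x. enat s \<le> T x} x = (1::real)" using ge ms order_trans[of "enat s" "enat k" "T x"] by (auto simp: indicator_def)
    have n1: "T x \<notin> enat ` {s..<k}" "T x \<notin> enat ` {m..<k}" "T x \<notin> enat ` {m..<k-1}" using ge by auto
    show ?thesis unfolding RgS H1 H2 ind Yk Yk1 using n1 by simp
  qed
qed

end


context L3
begin

lemma Hc_int:
  assumes "k \<le> K" "\<And>j. j \<in> {m..<k} \<Longrightarrow> integrable M (\<lambda>x. g j k (LA j x) * indicator {x. T x = enat j} x)"
  shows "integrable M (Hc Y A (Lbar Z Y A) T g m k)"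
proof -
  have "integrable M (\<lambda>x. Y k x - (\<Sum>j\<in>{m..<k}. g j k (LA j x) * indicator {x. T x = enat j} x))"
    using Y_int assms by (intro Bochner_Integration.integrable_diff Bochner_Integration.integrable_sum) auto
  then show ?thesis by (simp add: Hc_def[abs_def])
qed

lemma Sge_Suc: "{x. enat (Suc m) \<le> T x} = {x. enat m < T x}"
  by (auto simp: Suc_ile_eq)

lemma ind_split: "m \<le> K \<Longrightarrow> (indicator {x. enat m \<le> T x} x :: real) = indicator {x. T x = enat m} x + indicator {x. enat m < T x} x"
  by (auto simp: indicator_def le_less)

lemma exist:
  assumes mk: "m < k" "k \<le> K"
  shows "star_prop M Mz Z Y A T gstar m k"
proof -
  have mK: "m \<le> K" using mk by auto
  interpret Fm: sigma_finite_subalgebra M "F m" by (rule sfs[OF prob sub_F[OF mK]])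
  interpret Gm: sigma_finite_subalgebra M "G m" by (rule sfs[OF prob sub_G[OF mK]])
  define W where "W = (\<lambda>x. Yinf k x - Yinf (k - 1) x)"
  define D where "D = (\<lambda>x. Hc Y A (Lbar Z Y A) T gstar m k x - Hc Y A (Lbar Z Y A) T gstar m (k - 1) x)"
  define St where "St = {x. enat m \<le> T x}"
  define Se where "Se = {x. T x = enat m}"
  define Sg where "Sg = {x. enat m < T x}"
  have W_int: "integrable M W" unfolding W_def using Yinf_int mk by auto
  have D_int: "integrable M D" unfolding D_def
    by (intro Bochner_Integration.integrable_diff Hc_int gstar_int) (use mk in auto)
  have iStG: "(indicator St :: 'a \<Rightarrow> real) \<in> borel_measurable (G m)" unfolding St_def by (rule ind_ge_G[OF mK])
  have iStF: "(indicator St :: 'a \<Rightarrow> real) \<in> borel_measurable (F m)" unfolding St_def by (rule ind_ge_F[OF mK])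
  have iSeG: "(indicator Se :: 'a \<Rightarrow> real) \<in> borel_measurable (G m)" unfolding Se_def by (rule ind_eq_G[OF mK])
  have iSgG: "(indicator Sg :: 'a \<Rightarrow> real) \<in> borel_measurable (G m)" unfolding Sg_def by (rule ind_gt_G[OF mK])
  have iStM: "(indicator St :: 'a \<Rightarrow> real) \<in> borel_measurable M" by (rule G_M[OF mK iStG])
  have iSeM: "(indicator Se :: 'a \<Rightarrow> real) \<in> borel_measurable M" by (rule G_M[OF mK iSeG])
  have iSgM: "(indicator Sg :: 'a \<Rightarrow> real) \<in> borel_measurable M" by (rule G_M[OF mK iSgG])
  have nG: "nullH M (G m) (\<lambda>x. \<Sum>j\<in>{m..<k}. Rg gstar k j x)"
  proof (rule nullH_sum[OF _ _ sub_G[OF mK]])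
    fix j assume j: "j \<in> {m..<k}"
    have "sets (G m) \<subseteq> sets (G j)" using sets_GG[of m j] j mk by auto
    then show "nullH M (G m) (Rg gstar k j)" using nullH_mono[OF Rg_null[of m j k]] j mk by auto
  qed simp
  have nF: "nullH M (F m) (\<lambda>x. \<Sum>j\<in>{Suc m..<k}. Rg gstar k j x)"
  proof (rule nullH_sum[OF _ _ sub_F[OF mK]])
    fix j assume j: "j \<in> {Suc m..<k}"
    have "sets (F m) \<subseteq> sets (G j)" using sets_FG[OF mK] sets_GG[of m j] j mk by auto
    then show "nullH M (F m) (Rg gstar k j)" using nullH_mono[OF Rg_null[of m j k]] j mk by auto
  qed simp
  have StW_int: "integrable M (\<lambda>x. indicator St x * W x)" by (rule integrable_ind_mult[OF W_int iStM])
  have SgW_int: "integrable M (\<lambda>x. indicator Sg x * W x)" by (rule integrable_ind_mult[OF W_int iSgM])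
  have SeW_int: "integrable M (\<lambda>x. indicator Se x * W x)" by (rule integrable_ind_mult[OF W_int iSeM])
  have L1: "AE x in M. real_cond_exp M (G m) (\<lambda>x. indicator St x * D x) x = real_cond_exp M (G m) (\<lambda>x. indicator St x * W x) x"
  proof -
    have "AE x in M. real_cond_exp M (G m) (\<lambda>x. indicator St x * D x) x
        = real_cond_exp M (G m) (\<lambda>x. indicator St x * W x + (\<Sum>j\<in>{m..<k}. Rg gstar k j x)) x"
    proof (rule Gm.real_cond_exp_cong)
      show "AE x in M. indicator St x * D x = indicator St x * W x + (\<Sum>j\<in>{m..<k}. Rg gstar k j x)"
        by (rule AE_I2) (use decomp[of _ m m k gstar] mk in \<open>auto simp: St_def D_def W_def\<close>)
      show "(\<lambda>x. indicator St x * D x) \<in> borel_measurable M" using iStM D_int by measurable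
      show "(\<lambda>x. indicator St x * W x + (\<Sum>j\<in>{m..<k}. Rg gstar k j x)) \<in> borel_measurable M"
        by (intro borel_measurable_integrable Bochner_Integration.integrable_add StW_int) (use nG in \<open>simp add: nullH_def\<close>)
    qed
    with Gm.ce_add_null[OF StW_int nG] show ?thesis by eventually_elim auto
  qed
  have L2: "AE x in M. real_cond_exp M (F m) (\<lambda>x. indicator Sg x * D x) x = real_cond_exp M (F m) (\<lambda>x. indicator Sg x * W x) x"
  proof -
    have "AE x in M. real_cond_exp M (F m) (\<lambda>x. indicator Sg x * D x) x
        = real_cond_exp M (F m) (\<lambda>x. indicator Sg x * W x + (\<Sum>j\<in>{Suc m..<k}. Rg gstar k j x)) x"
    proof (rule Fm.real_cond_exp_cong)
      show "AE x in M. indicator Sg x * D x = indicator Sg x * W x + (\<Sum>j\<in>{Suc m..<k}. Rg gstar k j x)"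
        by (rule AE_I2) (use decomp[of _ m "Suc m" k gstar] mk in \<open>auto simp: Sg_def D_def W_def Sge_Suc\<close>)
      show "(\<lambda>x. indicator Sg x * D x) \<in> borel_measurable M" using iSgM D_int by measurable
      show "(\<lambda>x. indicator Sg x * W x + (\<Sum>j\<in>{Suc m..<k}. Rg gstar k j x)) \<in> borel_measurable M"
        by (intro borel_measurable_integrable Bochner_Integration.integrable_add SgW_int) (use nF in \<open>simp add: nullH_def\<close>)
    qed
    with Fm.ce_add_null[OF SgW_int nF] show ?thesis by eventually_elim auto
  qed
  have L3: "AE x in M. x \<in> St \<longrightarrow> condE_on M St (G m) D x = real_cond_exp M (G m) (\<lambda>x. indicator St x * D x) x"
    by (rule Gm.condE_on_F[OF prob iStG])
  have L5: "AE x in M. real_cond_exp M (G m) (\<lambda>x. indicator St x * W x) x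
       = real_cond_exp M (G m) (\<lambda>x. indicator Se x * W x) x + real_cond_exp M (G m) (\<lambda>x. indicator Sg x * W x) x"
  proof -
    have "AE x in M. real_cond_exp M (G m) (\<lambda>x. indicator St x * W x) x
       = real_cond_exp M (G m) (\<lambda>x. indicator Se x * W x + indicator Sg x * W x) x"
      by (rule Gm.real_cond_exp_cong)
        (use iStM iSeM iSgM W_int ind_split[OF mK] in \<open>auto simp: St_def Se_def Sg_def algebra_simps\<close>)
    with Gm.real_cond_exp_add[OF SeW_int SgW_int] show ?thesis by eventually_elim auto
  qed
  have L6a: "AE x in M. x \<notin> Se \<longrightarrow> real_cond_exp M (G m) (\<lambda>x. indicator Se x * W x) x = 0"
    by (rule Gm.ce_outside[OF iSeG W_int])
  have L6b: "AE x in M. x \<notin> Sg \<longrightarrow> real_cond_exp M (G m) (\<lambda>x. indicator Sg x * W x) x = 0"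
    by (rule Gm.ce_outside[OF iSgG W_int])
  have L7: "AE x in M. x \<in> Se \<longrightarrow> condE_on M Se (G m) W x = real_cond_exp M (G m) (\<lambda>x. indicator Se x * W x) x"
    by (rule Gm.condE_on_F[OF prob iSeG])
  have par: "AE x in M. T x = enat m \<longrightarrow> condE_on M Se (G m) W x = condE_on M Sg (F m) W x"
    using parallel[OF mk] unfolding Se_def Sg_def W_def .
  have L8: "AE x in M. x \<in> Sg \<longrightarrow> real_cond_exp M (F m) (indicator Sg) x * real_cond_exp M (G m) (\<lambda>x. indicator Sg x * W x) x
            = real_cond_exp M (F m) (\<lambda>x. indicator Sg x * W x) x"
    by (rule trace_ce[OF prob sub_F[OF mK] sub_G[OF mK] sub_GF[OF mK] iSgG _ W_int])
       (use trace_G[OF mK] in \<open>auto simp: Sg_def\<close>)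
  have L9: "AE x in M. enat m \<le> T x \<longrightarrow> real_cond_exp M (F m) (indicator Sg) x > 0"
  proof -
    have eq: "(\<lambda>x. indicator St x * indicator {x. A m x = 0} x) = (indicator Sg :: 'a \<Rightarrow> real)"
      using T_ge_iff[OF mK] T_gt_iff[OF mK] by (auto simp: fun_eq_iff St_def Sg_def indicator_def le_less)
    have c: "AE x in M. x \<in> St \<longrightarrow> condE_on M St (F m) (indicator {x. A m x = 0}) x
        = real_cond_exp M (F m) (indicator Sg) x"
      using Fm.condE_on_F[OF prob iStF, of "indicator {x. A m x = 0}"] unfolding eq .
    show ?thesis using positivity[OF mK] c unfolding St_def by eventually_elim auto
  qed
  have main: "AE x in M. enat m \<le> T x \<longrightarrow> condE_on M St (G m) D x = condE_on M Sg (F m) D x"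
    using L1 L2 L3 L5 L6a L6b L7 par L8 L9
  proof eventually_elim
    case (elim x)
    show ?case
    proof
      assume ge: "enat m \<le> T x"
      have R: "condE_on M Sg (F m) D x = real_cond_exp M (F m) (\<lambda>x. indicator Sg x * W x) x / real_cond_exp M (F m) (indicator Sg) x"
        using elim(2) by (simp add: condE_on_def)
      have L: "condE_on M St (G m) D x = real_cond_exp M (G m) (\<lambda>x. indicator Se x * W x) x + real_cond_exp M (G m) (\<lambda>x. indicator Sg x * W x) x"
        using elim(1,3,4) ge by (simp add: St_def)
      show "condE_on M St (G m) D x = condE_on M Sg (F m) D x"
      proof (cases "T x = enat m")
        case True
        then have "x \<notin> Sg" "x \<in> Se" by (auto simp: Sg_def Se_def)
        then have a: "real_cond_exp M (G m) (\<lambda>x. indicator Sg x * W x) x = 0"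
          and b: "condE_on M Se (G m) W x = real_cond_exp M (G m) (\<lambda>x. indicator Se x * W x) x"
          using elim(6,7) by auto
        have c: "condE_on M Se (G m) W x = condE_on M Sg (F m) W x" using elim(8) True by auto
        have d: "condE_on M Sg (F m) W x = real_cond_exp M (F m) (\<lambda>x. indicator Sg x * W x) x / real_cond_exp M (F m) (indicator Sg) x"
          by (simp add: condE_on_def)
        show ?thesis unfolding L R a using b c d by simp
      next
        case False
        then have x: "x \<in> Sg" "x \<notin> Se" using ge by (auto simp: Sg_def Se_def le_less)
        have p: "real_cond_exp M (F m) (indicator Sg) x > 0" using elim(10) ge by auto
        have a: "real_cond_exp M (G m) (\<lambda>x. indicator Se x * W x) x = 0" using elim(5) x by auto
        have tr: "real_cond_exp M (F m) (indicator Sg) x * real_cond_exp M (G m) (\<lambda>x. indicator Sg x * W x) x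
            = real_cond_exp M (F m) (\<lambda>x. indicator Sg x * W x) x" using elim(9) x by auto
        have "real_cond_exp M (G m) (\<lambda>x. indicator Sg x * W x) x
            = real_cond_exp M (F m) (\<lambda>x. indicator Sg x * W x) x / real_cond_exp M (F m) (indicator Sg) x"
          using tr p by (metis less_irrefl nonzero_eq_divide_eq mult.commute)
        then show ?thesis unfolding L R a by simp
      qed
    qed
  qed
  then show ?thesis unfolding star_prop_def D_def St_def Sg_def .
qed

end


context L3
begin

lemma uniq:
  assumes hg: "\<forall>m k. m < k \<longrightarrow> k \<le> K \<longrightarrow>
                  g m k \<in> borel_measurable (LM Mz m \<Otimes>\<^sub>M borel)
                \<and> integrable M (\<lambda>\<omega>. g m k (Lbar Z Y A m \<omega>, A m \<omega>) * indicator {x. T x = enat m} \<omega>)"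
    and hs: "\<forall>m k. m < k \<longrightarrow> k \<le> K \<longrightarrow> star_prop M Mz Z Y A T g m k"
  shows "m < k \<Longrightarrow> k \<le> K \<Longrightarrow> AE \<omega> in M. T \<omega> = enat m \<longrightarrow> g m k (LA m \<omega>) = gstar m k (LA m \<omega>)"
proof (induction "k - m" arbitrary: m k rule: less_induct)
  case less
  note mk = less.prems
  have mK: "m \<le> K" using mk by auto
  interpret Fm: sigma_finite_subalgebra M "F m" by (rule sfs[OF prob sub_F[OF mK]])
  interpret Gm: sigma_finite_subalgebra M "G m" by (rule sfs[OF prob sub_G[OF mK]])
  define \<delta> where "\<delta> = (\<lambda>j l x. (g j l (LA j x) - gstar j l (LA j x)) * indicator {x. T x = enat j} x)"
  have \<delta>_int: "integrable M (\<delta> j l)" if "j < l" "l \<le> K" for j l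
  proof -
    have "integrable M (\<lambda>x. g j l (LA j x) * indicator {x. T x = enat j} x - gstar j l (LA j x) * indicator {x. T x = enat j} x)"
      using hg that gstar_int[OF that] by (intro Bochner_Integration.integrable_diff) auto
    then show ?thesis unfolding \<delta>_def by (simp add: left_diff_distrib)
  qed
  have \<delta>_G: "\<delta> j l \<in> borel_measurable (G j)" if "j < l" "l \<le> K" for j l
  proof -
    have jK: "j \<le> K" using that by auto
    have "(\<lambda>x. g j l (LA j x)) \<in> borel_measurable (G j)"
      using measurable_compose[OF LA_meas_G[OF jK]] hg that by auto
    moreover have "(\<lambda>x. gstar j l (LA j x)) \<in> borel_measurable (G j)"
      using measurable_compose[OF LA_meas_G[OF jK] gstar_meas[OF that]] .
    ultimately show ?thesis unfolding \<delta>_def using ind_eq_G[OF jK] by measurable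
  qed
  have \<delta>0: "AE x in M. \<delta> j l x = 0" if "j < l" "l \<le> K" "l - j < k - m" for j l
    using less.hyps[OF that(3,1,2)] by eventually_elim (auto simp: \<delta>_def indicator_def)
  have A1: "AE x in M. \<forall>j\<in>{Suc m..<k}. \<delta> j k x = 0"
    by (rule eventually_ball_finite) (use mk in \<open>auto intro!: \<delta>0\<close>)
  have A2: "AE x in M. \<forall>j\<in>{m..<k-1}. \<delta> j (k-1) x = 0"
    by (rule eventually_ball_finite) (use mk in \<open>auto intro!: \<delta>0\<close>)
  define Dg where "Dg = (\<lambda>x. Hc Y A (Lbar Z Y A) T g m k x - Hc Y A (Lbar Z Y A) T g m (k - 1) x)"
  define Ds where "Ds = (\<lambda>x. Hc Y A (Lbar Z Y A) T gstar m k x - Hc Y A (Lbar Z Y A) T gstar m (k - 1) x)"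
  have pw: "Dg x - Ds x = - (\<Sum>j\<in>{m..<k}. \<delta> j k x) + (\<Sum>j\<in>{m..<k-1}. \<delta> j (k-1) x)" for x
    by (simp add: Dg_def Ds_def Hc_def \<delta>_def left_diff_distrib sum_subtractf)
  have AEd: "AE x in M. Dg x - Ds x = - \<delta> m k x"
    using A1 A2
  proof eventually_elim
    case (elim x)
    have "(\<Sum>j\<in>{m..<k}. \<delta> j k x) = \<delta> m k x + (\<Sum>j\<in>{Suc m..<k}. \<delta> j k x)"
      by (rule sum.atLeast_Suc_lessThan) (use mk in auto)
    then show ?case unfolding pw using elim by simp
  qed
  have Dg_int: "integrable M Dg" unfolding Dg_def
    by (intro Bochner_Integration.integrable_diff Hc_int) (use mk hg in auto)
  have Ds_int: "integrable M Ds" unfolding Ds_def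
    by (intro Bochner_Integration.integrable_diff Hc_int gstar_int) (use mk in auto)
  define St where "St = {x. enat m \<le> T x}"
  define Sg where "Sg = {x. enat m < T x}"
  have iStG: "(indicator St :: 'a \<Rightarrow> real) \<in> borel_measurable (G m)" unfolding St_def by (rule ind_ge_G[OF mK])
  have iSgG: "(indicator Sg :: 'a \<Rightarrow> real) \<in> borel_measurable (G m)" unfolding Sg_def by (rule ind_gt_G[OF mK])
  have iStM: "(indicator St :: 'a \<Rightarrow> real) \<in> borel_measurable M" by (rule G_M[OF mK iStG])
  have iSgM: "(indicator Sg :: 'a \<Rightarrow> real) \<in> borel_measurable M" by (rule G_M[OF mK iSgG])
  have s1: "AE x in M. enat m \<le> T x \<longrightarrow> condE_on M St (G m) Dg x = condE_on M Sg (F m) Dg x"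
    using hs mk unfolding star_prop_def Dg_def St_def Sg_def by auto
  have s2: "AE x in M. enat m \<le> T x \<longrightarrow> condE_on M St (G m) Ds x = condE_on M Sg (F m) Ds x"
    using exist[OF mk] unfolding star_prop_def Ds_def St_def Sg_def by auto
  have a: "AE x in M. real_cond_exp M (G m) (\<lambda>x. indicator St x * Dg x - indicator St x * Ds x) x
      = real_cond_exp M (G m) (\<lambda>x. indicator St x * Dg x) x - real_cond_exp M (G m) (\<lambda>x. indicator St x * Ds x) x"
    by (rule Gm.real_cond_exp_diff[OF integrable_ind_mult[OF Dg_int iStM] integrable_ind_mult[OF Ds_int iStM]])
  have b: "AE x in M. real_cond_exp M (G m) (\<lambda>x. indicator St x * Dg x - indicator St x * Ds x) x
      = real_cond_exp M (G m) (\<lambda>x. - \<delta> m k x) x"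
  proof (rule Gm.real_cond_exp_cong)
    show "AE x in M. indicator St x * Dg x - indicator St x * Ds x = - \<delta> m k x"
      using AEd
    proof eventually_elim
      case (elim x)
      have "indicator St x * Dg x - indicator St x * Ds x = indicator St x * (- \<delta> m k x)"
        using elim by (simp add: right_diff_distrib[symmetric])
      also have "\<dots> = - \<delta> m k x" by (auto simp: St_def \<delta>_def indicator_def)
      finally show ?case .
    qed
    show "(\<lambda>x. indicator St x * Dg x - indicator St x * Ds x) \<in> borel_measurable M"
      using iStM Dg_int Ds_int by measurable
    show "(\<lambda>x. - \<delta> m k x) \<in> borel_measurable M" using \<delta>_int[OF mk] by measurable
  qed
  have c: "AE x in M. real_cond_exp M (G m) (\<lambda>x. - \<delta> m k x) x = - \<delta> m k x"
    by (rule Gm.real_cond_exp_F_meas) (use \<delta>_int[OF mk] \<delta>_G[OF mk] in auto)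
  have d: "AE x in M. real_cond_exp M (F m) (\<lambda>x. indicator Sg x * Dg x - indicator Sg x * Ds x) x
      = real_cond_exp M (F m) (\<lambda>x. indicator Sg x * Dg x) x - real_cond_exp M (F m) (\<lambda>x. indicator Sg x * Ds x) x"
    by (rule Fm.real_cond_exp_diff[OF integrable_ind_mult[OF Dg_int iSgM] integrable_ind_mult[OF Ds_int iSgM]])
  have e: "AE x in M. real_cond_exp M (F m) (\<lambda>x. indicator Sg x * Dg x - indicator Sg x * Ds x) x
      = real_cond_exp M (F m) (\<lambda>x. 0) x"
  proof (rule Fm.real_cond_exp_cong)
    show "AE x in M. indicator Sg x * Dg x - indicator Sg x * Ds x = 0"
      using AEd
    proof eventually_elim
      case (elim x)
      have "indicator Sg x * Dg x - indicator Sg x * Ds x = indicator Sg x * (- \<delta> m k x)"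
        using elim by (simp add: right_diff_distrib[symmetric])
      also have "\<dots> = 0" by (auto simp: Sg_def \<delta>_def indicator_def)
      finally show ?case .
    qed
    show "(\<lambda>x. indicator Sg x * Dg x - indicator Sg x * Ds x) \<in> borel_measurable M"
      using iSgM Dg_int Ds_int by measurable
  qed simp
  have f: "AE x in M. real_cond_exp M (F m) (\<lambda>x. 0) x = 0"
    by (rule Fm.real_cond_exp_F_meas) auto
  have g1: "AE x in M. x \<in> St \<longrightarrow> condE_on M St (G m) Dg x = real_cond_exp M (G m) (\<lambda>x. indicator St x * Dg x) x"
    by (rule Gm.condE_on_F[OF prob iStG])
  have g2: "AE x in M. x \<in> St \<longrightarrow> condE_on M St (G m) Ds x = real_cond_exp M (G m) (\<lambda>x. indicator St x * Ds x) x"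
    by (rule Gm.condE_on_F[OF prob iStG])
  show ?case
    using s1 s2 a b c d e f g1 g2
  proof eventually_elim
    case (elim x)
    show ?case
    proof
      assume T: "T x = enat m"
      then have xS: "x \<in> St" "enat m \<le> T x" by (auto simp: St_def)
      have "- \<delta> m k x = condE_on M St (G m) Dg x - condE_on M St (G m) Ds x"
        using elim xS by simp
      also have "\<dots> = condE_on M Sg (F m) Dg x - condE_on M Sg (F m) Ds x"
        using elim xS by simp
      also have "\<dots> = (real_cond_exp M (F m) (\<lambda>x. indicator Sg x * Dg x) x - real_cond_exp M (F m) (\<lambda>x. indicator Sg x * Ds x) x)
                       / real_cond_exp M (F m) (indicator Sg) x"
        by (simp add: condE_on_def diff_divide_distrib)
      also have "\<dots> = 0" using elim by simp
      finally have "\<delta> m k x = 0" by simp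
      then show "g m k (LA m x) = gstar m k (LA m x)" using T by (simp add: \<delta>_def indicator_def)
    qed
  qed
qed

end


theorem lemma3:
  fixes M :: "'a measure" and Mz :: "'z measure" and K :: nat
    and Z :: "nat \<Rightarrow> 'a \<Rightarrow> 'z" and Y A Yinf :: "nat \<Rightarrow> 'a \<Rightarrow> real"
    and Ycf :: "nat \<Rightarrow> nat \<Rightarrow> real \<Rightarrow> 'a \<Rightarrow> real"
    and gstar :: "nat \<Rightarrow> nat \<Rightarrow> ((nat \<Rightarrow> 'z) \<times> (nat \<Rightarrow> real) \<times> (nat \<Rightarrow> real)) \<times> real \<Rightarrow> real"
    and T :: "'a \<Rightarrow> enat"
  defines "T \<equiv> Tinit K A"
  assumes prob: "prob_space M"
    and Z_meas: "\<And>m. m \<le> K \<Longrightarrow> Z m \<in> measurable M Mz"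
    and A_meas: "\<And>m. m \<le> K \<Longrightarrow> A m \<in> borel_measurable M"
    and Y_int: "\<And>k. k \<le> K \<Longrightarrow> integrable M (Y k)"
    and Yinf_int: "\<And>k. k \<le> K \<Longrightarrow> integrable M (Yinf k)"
    and Ycf_int: "\<And>m k. m < k \<Longrightarrow> k \<le> K \<Longrightarrow> integrable M (\<lambda>\<omega>. Ycf k m (A m \<omega>) \<omega>)"
    and cons1: "\<And>k \<omega>. k \<le> K \<Longrightarrow> \<omega> \<in> space M \<Longrightarrow> T \<omega> < enat k \<Longrightarrow>
                  Y k \<omega> = Ycf k (the_enat (T \<omega>)) (A (the_enat (T \<omega>)) \<omega>) \<omega>"
    and cons2: "\<And>k \<omega>. k \<le> K \<Longrightarrow> \<omega> \<in> space M \<Longrightarrow> T \<omega> \<ge> enat k \<Longrightarrow> Y k \<omega> = Yinf k \<omega>"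
    and cf_early: "\<And>k m a \<omega>. k \<le> m \<Longrightarrow> \<omega> \<in> space M \<Longrightarrow> Ycf k m a \<omega> = Yinf k \<omega>"
    and positivity: "\<And>m. m \<le> K \<Longrightarrow> AE \<omega> in M. T \<omega> \<ge> enat m \<longrightarrow>
                  condE_on M {x. T x \<ge> enat m} (sigL M Mz Z Y A m) (indicator {x. A m x = 0}) \<omega> > 0"
    and parallel: "\<And>m k. m < k \<Longrightarrow> k \<le> K \<Longrightarrow> AE \<omega> in M. T \<omega> = enat m \<longrightarrow>
                  condE_on M {x. T x = enat m} (sigLA M Mz Z Y A m) (\<lambda>x. Yinf k x - Yinf (k - 1) x) \<omega>
                = condE_on M {x. T x > enat m} (sigL M Mz Z Y A m) (\<lambda>x. Yinf k x - Yinf (k - 1) x) \<omega>"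
    and gstar_meas: "\<And>m k. m < k \<Longrightarrow> k \<le> K \<Longrightarrow> gstar m k \<in> borel_measurable (LM Mz m \<Otimes>\<^sub>M borel)"
    and gstar_blip: "\<And>m k. m < k \<Longrightarrow> k \<le> K \<Longrightarrow> AE \<omega> in M. T \<omega> = enat m \<longrightarrow>
                  gstar m k (Lbar Z Y A m \<omega>, A m \<omega>)
                = condE_on M {x. T x = enat m} (sigLA M Mz Z Y A m) (\<lambda>x. Ycf k m (A m x) x - Yinf k x) \<omega>"
  shows "(\<forall>m k. m < k \<longrightarrow> k \<le> K \<longrightarrow> star_prop M Mz Z Y A T gstar m k)
       \<and> (\<forall>g. (\<forall>m k. m < k \<longrightarrow> k \<le> K \<longrightarrow>
                  g m k \<in> borel_measurable (LM Mz m \<Otimes>\<^sub>M borel)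
                \<and> integrable M (\<lambda>\<omega>. g m k (Lbar Z Y A m \<omega>, A m \<omega>) * indicator {x. T x = enat m} \<omega>))
             \<longrightarrow> (\<forall>m k. m < k \<longrightarrow> k \<le> K \<longrightarrow> star_prop M Mz Z Y A T g m k)
             \<longrightarrow> (\<forall>m k. m < k \<longrightarrow> k \<le> K \<longrightarrow>
                  (AE \<omega> in M. T \<omega> = enat m \<longrightarrow> g m k (Lbar Z Y A m \<omega>, A m \<omega>) = gstar m k (Lbar Z Y A m \<omega>, A m \<omega>))))"
  proof -
  interpret L: L3 M Mz K Z Y A Yinf Ycf gstar T
    apply (rule L3.intro)
     apply (simp add: T_def)
    apply (rule assms; assumption)+
    done
  show ?thesis
  proof (intro conjI allI impI)
    fix m k assume "m < k" "k \<le> K"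
    then show "star_prop M Mz Z Y A T gstar m k" by (rule L.exist)
  next
    fix g m k
    assume h1: "\<forall>m k. m < k \<longrightarrow> k \<le> K \<longrightarrow>
                  g m k \<in> borel_measurable (LM Mz m \<Otimes>\<^sub>M borel)
                \<and> integrable M (\<lambda>\<omega>. g m k (Lbar Z Y A m \<omega>, A m \<omega>) * indicator {x. T x = enat m} \<omega>)"
      and h2: "\<forall>m k. m < k \<longrightarrow> k \<le> K \<longrightarrow> star_prop M Mz Z Y A T g m k"
      and mk: "m < k" "k \<le> K"
    show "AE \<omega> in M. T \<omega> = enat m \<longrightarrow> g m k (Lbar Z Y A m \<omega>, A m \<omega>) = gstar m k (Lbar Z Y A m \<omega>, A m \<omega>)"
      by (rule L.uniq[OF h1 h2 mk])
  qed
qed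


end
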